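(* In any finite ELP and for any policy $\pi$, let $Q_{\max}$ be any optimal solution of the problem: maximize $\mathbb E_\pi[Q(S_T,A_T)]$ over $Q\in\mathcal Q$ subject to $Q(s,a)\le\mathcal BQ(s,a)$ for all $(s,a)$ (a maximin Q-function of $\mathcal L_\pi$). Then $Q_{\max}$ is an optimal Q-function: every $Q_{\max}$-greedy policy $\mu$ satisfies $J(\mu)=\max_{\pi'}J(\pi')$.
   Context: A finite ELP is $(\mathcal S,\mathcal A,P,R,\rho)$ with finite $\mathcal S,\mathcal A$, reward $R:\mathcal S\to\mathbb R$, transitions $P(s'|s,a)$, distribution $\rho$, and nonempty terminal set $\mathcal S_\bot$. Under a policy $\pi$, $S_0$ is a fixed terminal state, $A_t\sim\pi(\cdot|S_t)$, $S_{t+1}\sim P(\cdot|S_t,A_t)$, and $T=\inf\{t\ge1:S_t\in\mathcal S_\bot\}$. ELP conditions: $\mathbb E_\pi[T]<\infty$ for every $\pi$; $P(s'|s,a)=\rho(s')$ for all $s\in\mathcal S_\bot$, all $a,s'$; every state is reachable under some policy. $J(\pi)=\mathbb E_\pi[\sum_{t=1}^TR(S_t)]$. $\mathcal Q$ = all functions $\mathcal S\times\mathcal A\to\mathbb R$. $\mathcal BQ(s,a)=\sum_{s'}P(s'|s,a)\big(R(s')+\mathbf 1[s'\notin\mathcal S_\bot]\max_{a'}Q(s',a')\big)$. A $Q$-greedy policy is a policy with $\mu(a|s)>0$ only if $Q(s,a)=\max_{\bar a}Q(s,\bar a)$. *)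

theory Defs
  imports Complex_Main "HOL-Library.FuncSet"
begin

(* P s a s' = P(s'|s,a), R : 's => real, rho : 's => real, Sbot = S_bot,
   s0 = the fixed terminal start state S_0.
   A (stationary, randomized) policy pi s a = pi(a|s). *)

definition stoch :: "('b::finite \<Rightarrow> real) \<Rightarrow> bool" where
  "stoch d \<longleftrightarrow> (\<forall>x. 0 \<le> d x) \<and> sum d UNIV = 1"

definition is_policy :: "('s::finite \<Rightarrow> 'a::finite \<Rightarrow> real) \<Rightarrow> bool" where
  "is_policy \<pi> \<longleftrightarrow> (\<forall>s. stoch (\<pi> s))"

definition paths :: "nat \<Rightarrow> (nat \<Rightarrow> 'b) set" where
  "paths n = Pi\<^sub>E {0..n} (\<lambda>_. UNIV)"

definition traj_w ::
  "('s \<Rightarrow> 'a \<Rightarrow> 's \<Rightarrow> real) \<Rightarrow> 's \<Rightarrow> ('s \<Rightarrow> 'a \<Rightarrow> real) \<Rightarrow> nat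
   \<Rightarrow> (nat \<Rightarrow> 's) \<Rightarrow> (nat \<Rightarrow> 'a) \<Rightarrow> real" where
  "traj_w P s0 \<pi> n ss as =
     (if ss 0 = s0 then 1 else 0)
     * (\<Prod>t<n. \<pi> (ss t) (as t) * P (ss t) (as t) (ss (Suc t)))
     * \<pi> (ss n) (as n)"

definition traj_exp ::
  "('s::finite \<Rightarrow> 'a::finite \<Rightarrow> 's \<Rightarrow> real) \<Rightarrow> 's \<Rightarrow> ('s \<Rightarrow> 'a \<Rightarrow> real) \<Rightarrow> nat
   \<Rightarrow> ((nat \<Rightarrow> 's) \<Rightarrow> (nat \<Rightarrow> 'a) \<Rightarrow> real) \<Rightarrow> real" where
  "traj_exp P s0 \<pi> n F =
     (\<Sum>ss\<in>paths n. \<Sum>as\<in>paths n. traj_w P s0 \<pi> n ss as * F ss as)"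

(* the event T = n, where T = inf {t >= 1. S_t in Sbot} *)
definition stops_at :: "'s set \<Rightarrow> nat \<Rightarrow> (nat \<Rightarrow> 's) \<Rightarrow> bool" where
  "stops_at Sbot n ss \<longleftrightarrow> 1 \<le> n \<and> (\<forall>t\<in>{1..<n}. ss t \<notin> Sbot) \<and> ss n \<in> Sbot"

definition prob_T_gt where
  "prob_T_gt P Sbot s0 \<pi> n =
     traj_exp P s0 \<pi> n (\<lambda>ss as. if \<forall>t\<in>{1..n}. ss t \<notin> Sbot then 1 else 0)"

(* E_pi[T] < infinity, via E[T] = sum_{n>=0} P(T > n) *)
definition finite_exp_T where
  "finite_exp_T P Sbot s0 \<pi> \<longleftrightarrow> summable (\<lambda>n. prob_T_gt P Sbot s0 \<pi> n)"

definition prob_state_at where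
  "prob_state_at P s0 \<pi> n s = traj_exp P s0 \<pi> n (\<lambda>ss as. if ss n = s then 1 else 0)"

definition is_ELP ::
  "('s::finite \<Rightarrow> 'a::finite \<Rightarrow> 's \<Rightarrow> real) \<Rightarrow> ('s \<Rightarrow> real) \<Rightarrow> 's set \<Rightarrow> 's \<Rightarrow> bool" where
  "is_ELP P \<rho> Sbot s0 \<longleftrightarrow>
     (\<forall>s a. stoch (P s a)) \<and> stoch \<rho> \<and> Sbot \<noteq> {} \<and> s0 \<in> Sbot
     \<and> (\<forall>\<pi>. is_policy \<pi> \<longrightarrow> finite_exp_T P Sbot s0 \<pi>)
     \<and> (\<forall>s\<in>Sbot. \<forall>a s'. P s a s' = \<rho> s')
     \<and> (\<forall>s. \<exists>\<pi> n. is_policy \<pi> \<and> prob_state_at P s0 \<pi> n s > 0)"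

definition J where
  "J P R Sbot s0 \<pi> =
     (\<Sum>n. traj_exp P s0 \<pi> n
        (\<lambda>ss as. if stops_at Sbot n ss then (\<Sum>t\<in>{1..n}. R (ss t)) else 0))"

definition L_obj where
  "L_obj P Sbot s0 \<pi> Q =
     (\<Sum>n. traj_exp P s0 \<pi> n
        (\<lambda>ss as. if stops_at Sbot n ss then Q (ss n) (as n) else 0))"

definition vmax :: "('s \<Rightarrow> 'a::finite \<Rightarrow> real) \<Rightarrow> 's \<Rightarrow> real" where
  "vmax Q s = Max (range (Q s))"

definition bellman ::
  "('s::finite \<Rightarrow> 'a::finite \<Rightarrow> 's \<Rightarrow> real) \<Rightarrow> ('s \<Rightarrow> real) \<Rightarrow> 's set
   \<Rightarrow> ('s \<Rightarrow> 'a \<Rightarrow> real) \<Rightarrow> 's \<Rightarrow> 'a \<Rightarrow> real" where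
  "bellman P R Sbot Q s a =
     (\<Sum>s'\<in>UNIV. P s a s' * (R s' + (if s' \<notin> Sbot then vmax Q s' else 0)))"

definition greedy :: "('s::finite \<Rightarrow> 'a::finite \<Rightarrow> real) \<Rightarrow> ('s \<Rightarrow> 'a \<Rightarrow> real) \<Rightarrow> bool" where
  "greedy Q \<mu> \<longleftrightarrow> is_policy \<mu> \<and> (\<forall>s a. \<mu> s a > 0 \<longrightarrow> Q s a = vmax Q s)"

end

theory Submission imports Defs begin

lemma finite_paths[simp]: "finite (paths n :: (nat \<Rightarrow> 'b::finite) set)"
  unfolding paths_def by (simp add: finite_PiE)

lemma sum_paths_Suc:
  fixes f :: "(nat \<Rightarrow> 'b::finite) \<Rightarrow> real"
  shows "(\<Sum>x\<in>paths (Suc n). f x) = (\<Sum>g\<in>paths n. \<Sum>y\<in>UNIV. f (g(Suc n := y)))"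
proof -
  have e: "paths (Suc n) = (\<lambda>(y,g). g(Suc n := y)) ` (UNIV \<times> (paths n :: (nat \<Rightarrow> 'b) set))"
    unfolding paths_def by (simp add: atLeast0_atMost_Suc PiE_insert_eq)
  have i: "inj_on (\<lambda>(y,g). g(Suc n := y)) (UNIV \<times> (paths n :: (nat \<Rightarrow> 'b) set))"
    unfolding paths_def using inj_combinator[of "Suc n" "{0..n}" "\<lambda>_. UNIV"] by simp
  have "(\<Sum>x\<in>paths (Suc n). f x) = (\<Sum>p\<in>UNIV \<times> paths n. f ((\<lambda>(y,g). g(Suc n := y)) p))"
    by (subst e, subst sum.reindex[OF i]) simp
  also have "\<dots> = (\<Sum>y\<in>UNIV. \<Sum>g\<in>paths n. f (g(Suc n := y)))"
    by (simp add: sum.cartesian_product split_beta)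
  also have "\<dots> = (\<Sum>g\<in>paths n. \<Sum>y\<in>UNIV. f (g(Suc n := y)))"
    by (rule sum.swap)
  finally show ?thesis .
qed

lemma sum_prod_split: "(\<Sum>p\<in>A \<times> B. g p) = (\<Sum>x\<in>A. \<Sum>y\<in>B. g (x,y))"
  by (simp add: sum.cartesian_product)

lemma sum_paths_0:
  fixes f :: "(nat \<Rightarrow> 'b::finite) \<Rightarrow> real"
  shows "(\<Sum>x\<in>paths 0. f x) = (\<Sum>y\<in>UNIV. f (\<lambda>a. if a = 0 then y else undefined))"
proof -
  have e: "paths 0 = (\<lambda>(y,g). g(0 := y)) ` (UNIV \<times> (Pi\<^sub>E {} (\<lambda>_. UNIV) :: (nat \<Rightarrow> 'b) set))"
    unfolding paths_def using PiE_insert_eq[of 0 "{}" "\<lambda>_. UNIV"] by simp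
  have i: "inj_on (\<lambda>(y,g). g(0 := y)) (UNIV \<times> (Pi\<^sub>E {} (\<lambda>_. UNIV) :: (nat \<Rightarrow> 'b) set))"
    using inj_combinator[of "0" "{}" "\<lambda>_. UNIV"] by simp
  show ?thesis
    by (subst e, subst sum.reindex[OF i]) (simp only: sum_prod_split, simp)
qed

lemma traj_w_Suc:
  "traj_w P s0 \<sigma> (Suc n) (ss(Suc n := s')) (as(Suc n := a')) =
     traj_w P s0 \<sigma> n ss as * P (ss n) (as n) s' * \<sigma> s' a'"
proof -
  have "(\<Prod>t<n. \<sigma> ((ss(Suc n := s')) t) ((as(Suc n := a')) t) * P ((ss(Suc n := s')) t) ((as(Suc n := a')) t) ((ss(Suc n := s')) (Suc t)))
      = (\<Prod>t<n. \<sigma> (ss t) (as t) * P (ss t) (as t) (ss (Suc t)))"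
    by (rule prod.cong) (auto simp: fun_upd_def)
  then show ?thesis unfolding traj_w_def by simp
qed

lemma n_a_tendsto:
  fixes a :: "nat \<Rightarrow> real"
  assumes sa: "summable a" and nn: "\<And>n. 0 \<le> a n" and dec: "\<And>n. a (Suc n) \<le> a n"
  shows "(\<lambda>n. real n * a n) \<longlonglongrightarrow> 0"
proof -
  define S where "S = (\<lambda>n. \<Sum>i<n. a i)"
  have S: "S \<longlonglongrightarrow> suminf a" unfolding S_def by (rule summable_LIMSEQ[OF sa])
  have fl: "filterlim (\<lambda>n::nat. n div 2) sequentially sequentially"
    unfolding filterlim_at_top eventually_sequentially
    by (metis div_le_mono nonzero_mult_div_cancel_left zero_neq_numeral)
  have Sh: "(\<lambda>n. S (n div 2)) \<longlonglongrightarrow> suminf a"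
    using filterlim_compose[OF S fl] by simp
  have ds: "decseq a" by (intro decseq_SucI dec)
  have bound: "real n * a n \<le> 2 * (S n - S (n div 2))" for n
  proof -
    have "S n - S (n div 2) = sum a {n div 2..<n}"
      unfolding S_def using sum_diff_nat_ivl[of 0 "n div 2" n a] by (simp add: atLeast0LessThan)
    moreover have "real (card {n div 2..<n}) * a n \<le> sum a {n div 2..<n}"
      by (rule sum_bounded_below) (use ds in \<open>auto simp: decseq_def\<close>)
    moreover have "real n * a n \<le> (2 * real (card {n div 2..<n})) * a n"
      by (rule mult_right_mono) (use nn in auto)
    moreover have "(2 * real (card {n div 2..<n})) * a n = 2 * (real (card {n div 2..<n}) * a n)"
      by simp
    ultimately show ?thesis
      by (metis (no_types, opaque_lifting) dual_order.trans mult_le_cancel_left_pos zero_less_numeral)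
  qed
  have "(\<lambda>n. 2 * (S n - S (n div 2))) \<longlonglongrightarrow> 2 * (suminf a - suminf a)"
    by (intro tendsto_intros S Sh)
  then have up: "(\<lambda>n. 2 * (S n - S (n div 2))) \<longlonglongrightarrow> 0" by simp
  show ?thesis
    by (rule tendsto_sandwich[of "\<lambda>_. 0" _ _ "\<lambda>n. 2 * (S n - S (n div 2))"])
       (use bound nn up in auto)
qed

locale elp =
  fixes P :: "'s::finite \<Rightarrow> 'a::finite \<Rightarrow> 's \<Rightarrow> real" and Sbot :: "'s set" and s0 :: 's
  assumes stP: "\<And>s a. stoch (P s a)" and s0bot: "s0 \<in> Sbot"
begin

lemma P_nonneg: "0 \<le> P s a s'" using stP[of s a] unfolding stoch_def by auto
lemma P_sum: "(\<Sum>s'\<in>UNIV. P s a s') = 1" using stP[of s a] unfolding stoch_def by auto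

lemma pol_nonneg: "is_policy \<sigma> \<Longrightarrow> 0 \<le> \<sigma> s a" unfolding is_policy_def stoch_def by auto
lemma pol_sum: "is_policy \<sigma> \<Longrightarrow> (\<Sum>a\<in>UNIV. \<sigma> s a) = 1" unfolding is_policy_def stoch_def by auto

lemma PS_sum: "is_policy \<sigma> \<Longrightarrow> (\<Sum>s'\<in>UNIV. \<Sum>a'\<in>UNIV. P s a s' * \<sigma> s' a') = 1"
  by (simp add: sum_distrib_left[symmetric] pol_sum P_sum)

lemma traj_w_nonneg: "is_policy \<sigma> \<Longrightarrow> 0 \<le> traj_w P s0 \<sigma> n ss as"
  unfolding traj_w_def by (intro mult_nonneg_nonneg prod_nonneg) (auto simp: P_nonneg pol_nonneg)

lemma traj_exp_Suc:
  "traj_exp P s0 \<sigma> (Suc n) F = traj_exp P s0 \<sigma> n (\<lambda>ss as. \<Sum>s'\<in>UNIV. \<Sum>a'\<in>UNIV.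
      P (ss n) (as n) s' * \<sigma> s' a' * F (ss(Suc n := s')) (as(Suc n := a')))"
proof -
  have "traj_exp P s0 \<sigma> (Suc n) F = (\<Sum>g\<in>paths n. \<Sum>y\<in>UNIV. \<Sum>h\<in>paths n. \<Sum>z\<in>UNIV.
       traj_w P s0 \<sigma> n g h * P (g n) (h n) y * \<sigma> y z * F (g(Suc n := y)) (h(Suc n := z)))"
    unfolding traj_exp_def sum_paths_Suc traj_w_Suc by simp
  also have "\<dots> = (\<Sum>g\<in>paths n. \<Sum>h\<in>paths n. \<Sum>y\<in>UNIV. \<Sum>z\<in>UNIV.
       traj_w P s0 \<sigma> n g h * (P (g n) (h n) y * \<sigma> y z * F (g(Suc n := y)) (h(Suc n := z))))"
    by (rule sum.cong[OF refl], subst sum.swap) (simp add: mult.assoc)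
  also have "\<dots> = traj_exp P s0 \<sigma> n (\<lambda>ss as. \<Sum>s'\<in>UNIV. \<Sum>a'\<in>UNIV.
      P (ss n) (as n) s' * \<sigma> s' a' * F (ss(Suc n := s')) (as(Suc n := a')))"
    unfolding traj_exp_def by (simp add: sum_distrib_left)
  finally show ?thesis .
qed

lemma traj_exp_0:
  assumes "\<And>ss as. F ss as = f (ss 0) (as 0)"
  shows "traj_exp P s0 \<sigma> 0 F = (\<Sum>a\<in>UNIV. \<sigma> s0 a * f s0 a)"
proof -
  have "\<And>y. (\<Sum>ya\<in>UNIV. (if y = s0 then 1 else 0) * \<sigma> y ya * f y ya) =
          (if y = s0 then \<Sum>ya\<in>UNIV. \<sigma> s0 ya * f s0 ya else 0)" by simp
  then show ?thesis
    unfolding traj_exp_def traj_w_def sum_paths_0 assms by simp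
qed

lemma traj_exp_add:
  "traj_exp P s0 \<sigma> n (\<lambda>ss as. F ss as + G ss as) = traj_exp P s0 \<sigma> n F + traj_exp P s0 \<sigma> n G"
  unfolding traj_exp_def by (simp add: distrib_left sum.distrib)

lemma traj_exp_cmult:
  "traj_exp P s0 \<sigma> n (\<lambda>ss as. c * F ss as) = c * traj_exp P s0 \<sigma> n F"
  unfolding traj_exp_def by (simp add: sum_distrib_left mult_ac)

lemma traj_exp_mono:
  assumes "is_policy \<sigma>" "\<And>ss as. F ss as \<le> G ss as"
  shows "traj_exp P s0 \<sigma> n F \<le> traj_exp P s0 \<sigma> n G"
  unfolding traj_exp_def
  by (intro sum_mono mult_left_mono assms traj_w_nonneg)

lemma traj_exp_abs:
  assumes "is_policy \<sigma>" "\<And>ss as. \<bar>F ss as\<bar> \<le> G ss as"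
  shows "\<bar>traj_exp P s0 \<sigma> n F\<bar> \<le> traj_exp P s0 \<sigma> n G"
proof -
  have "traj_exp P s0 \<sigma> n F \<le> traj_exp P s0 \<sigma> n G"
    by (rule traj_exp_mono) (use assms in \<open>auto simp: abs_le_iff\<close>)
  moreover have "traj_exp P s0 \<sigma> n (\<lambda>ss as. (-1) * G ss as) \<le> traj_exp P s0 \<sigma> n F"
  proof (rule traj_exp_mono)
    fix ss as show "(-1) * G ss as \<le> F ss as" using assms(2)[of ss as] by linarith
  qed (rule assms(1))
  ultimately show ?thesis unfolding traj_exp_cmult by linarith
qed

lemma traj_exp_Suc_indep:
  assumes "is_policy \<sigma>" "\<And>ss as s' a'. F (ss(Suc n := s')) (as(Suc n := a')) = G ss as"
  shows "traj_exp P s0 \<sigma> (Suc n) F = traj_exp P s0 \<sigma> n G"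
proof -
  have "traj_exp P s0 \<sigma> (Suc n) F = traj_exp P s0 \<sigma> n (\<lambda>ss as. (\<Sum>s'\<in>UNIV. \<Sum>a'\<in>UNIV.
      P (ss n) (as n) s' * \<sigma> s' a') * G ss as)"
    unfolding traj_exp_Suc assms(2) by (simp add: sum_distrib_right)
  then show ?thesis using PS_sum[OF assms(1)] by simp
qed

lemma traj_exp_one: "is_policy \<sigma> \<Longrightarrow> traj_exp P s0 \<sigma> n (\<lambda>_ _. 1) = 1"
proof (induction n)
  case 0 then show ?case by (subst traj_exp_0[where f="\<lambda>_ _. 1"]) (auto simp: pol_sum)
next
  case (Suc n) then show ?case by (subst traj_exp_Suc_indep[where G="\<lambda>_ _. 1"]) auto
qed

end

context elp begin

definition alive :: "nat \<Rightarrow> (nat \<Rightarrow> 's) \<Rightarrow> bool" where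
  "alive n ss \<longleftrightarrow> (\<forall>t\<in>{1..n}. ss t \<notin> Sbot)"

definition pT where
  "pT \<sigma> n = traj_exp P s0 \<sigma> n (\<lambda>ss as. if stops_at Sbot n ss then 1 else 0)"

definition aT where
  "aT \<sigma> n = traj_exp P s0 \<sigma> n (\<lambda>ss as. if alive n ss then 1 else 0)"

lemma aT_eq: "aT \<sigma> n = prob_T_gt P Sbot s0 \<sigma> n"
  unfolding aT_def prob_T_gt_def alive_def by simp

lemma alive_Suc: "alive (Suc n) (ss(Suc n := s')) \<longleftrightarrow> alive n ss \<and> s' \<notin> Sbot"
  unfolding alive_def by (auto simp: atLeastAtMostSuc_conv)

lemma stops_Suc: "stops_at Sbot (Suc n) (ss(Suc n := s')) \<longleftrightarrow> alive n ss \<and> s' \<in> Sbot"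
  unfolding alive_def stops_at_def by auto

lemma alive_0[simp]: "alive 0 ss" unfolding alive_def by auto
lemma stops_0[simp]: "\<not> stops_at Sbot 0 ss" unfolding stops_at_def by auto

lemma sumR_Suc: "(\<Sum>t\<in>{1..Suc n}. R ((ss(Suc n := s')) t)) = (\<Sum>t\<in>{1..n}. R (ss t)) + R s'"
proof -
  have "(\<Sum>t\<in>{1..n}. R ((ss(Suc n := s')) t)) = (\<Sum>t\<in>{1..n}. R (ss t))"
    by (rule sum.cong) auto
  then show ?thesis by simp
qed

lemma pT_nonneg: "is_policy \<sigma> \<Longrightarrow> 0 \<le> pT \<sigma> n"
  unfolding pT_def using traj_exp_mono[of \<sigma> "\<lambda>_ _. 0"] by (simp add: traj_exp_def)

lemma aT_nonneg: "is_policy \<sigma> \<Longrightarrow> 0 \<le> aT \<sigma> n"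
  unfolding aT_def using traj_exp_mono[of \<sigma> "\<lambda>_ _. 0"] by (simp add: traj_exp_def)

lemma aT_0: "is_policy \<sigma> \<Longrightarrow> aT \<sigma> 0 = 1"
  unfolding aT_def using traj_exp_one by simp

lemma pT_0: "pT \<sigma> 0 = 0"
  unfolding pT_def by (simp add: traj_exp_def)

lemma aT_step: "is_policy \<sigma> \<Longrightarrow> aT \<sigma> (Suc n) + pT \<sigma> (Suc n) = aT \<sigma> n"
  unfolding aT_def pT_def traj_exp_add[symmetric]
  by (rule traj_exp_Suc_indep) (auto simp: alive_Suc stops_Suc)

lemma aT_dec: "is_policy \<sigma> \<Longrightarrow> aT \<sigma> (Suc n) \<le> aT \<sigma> n"
  using aT_step[of \<sigma> n] pT_nonneg[of \<sigma> "Suc n"] by linarith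

lemma pT_partial: "is_policy \<sigma> \<Longrightarrow> (\<Sum>n<Suc N. pT \<sigma> n) = 1 - aT \<sigma> N"
proof (induction N)
  case 0 then show ?case by (simp add: pT_0 aT_0)
next
  case (Suc N) then show ?case using aT_step[of \<sigma> N] by simp
qed

lemma npT_partial: "is_policy \<sigma> \<Longrightarrow> (\<Sum>n<Suc N. real n * pT \<sigma> n) = (\<Sum>k<N. aT \<sigma> k) - real N * aT \<sigma> N"
proof (induction N)
  case 0 then show ?case by simp
next
  case (Suc N)
  have "real (Suc N) * pT \<sigma> (Suc N) = real (Suc N) * (aT \<sigma> N - aT \<sigma> (Suc N))"
    using aT_step[OF Suc.prems, of N] by simp
  then show ?case using Suc by (simp add: algebra_simps)
qed

definition fin_T where "fin_T \<sigma> \<longleftrightarrow> summable (aT \<sigma>)"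

lemma fin_T_iff: "fin_T \<sigma> \<longleftrightarrow> finite_exp_T P Sbot s0 \<sigma>"
  unfolding fin_T_def finite_exp_T_def aT_eq[abs_def] ..

lemma aT_lim: "fin_T \<sigma> \<Longrightarrow> aT \<sigma> \<longlonglongrightarrow> 0"
  unfolding fin_T_def by (rule summable_LIMSEQ_zero)

lemma naT_lim: "is_policy \<sigma> \<Longrightarrow> fin_T \<sigma> \<Longrightarrow> (\<lambda>n. real n * aT \<sigma> n) \<longlonglongrightarrow> 0"
  unfolding fin_T_def by (rule n_a_tendsto) (auto intro: aT_nonneg aT_dec)

lemma pT_sums: assumes "is_policy \<sigma>" "fin_T \<sigma>" shows "pT \<sigma> sums 1"
proof -
  have "(\<lambda>N. 1 - aT \<sigma> N) \<longlonglongrightarrow> 1 - 0" by (intro tendsto_intros aT_lim assms)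
  then have "(\<lambda>N. \<Sum>n<Suc N. pT \<sigma> n) \<longlonglongrightarrow> 1" using pT_partial[OF assms(1)] by simp
  then show ?thesis unfolding sums_def by (rule LIMSEQ_imp_Suc)
qed

lemma npT_summable: assumes "is_policy \<sigma>" "fin_T \<sigma>" shows "summable (\<lambda>n. real n * pT \<sigma> n)"
proof (rule summableI_nonneg_bounded)
  show "0 \<le> real n * pT \<sigma> n" for n using pT_nonneg[OF assms(1)] by simp
  show "(\<Sum>i<n. real i * pT \<sigma> i) \<le> suminf (aT \<sigma>)" for n
  proof (cases n)
    case 0 then show ?thesis
      using assms aT_nonneg suminf_nonneg unfolding fin_T_def by fastforce
  next
    case (Suc N)
    have "(\<Sum>k<N. aT \<sigma> k) \<le> suminf (aT \<sigma>)"
      using assms aT_nonneg unfolding fin_T_def by (intro sum_le_suminf) auto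
    moreover have "0 \<le> real N * aT \<sigma> N" using aT_nonneg[OF assms(1)] by simp
    ultimately show ?thesis unfolding Suc npT_partial[OF assms(1)] by linarith
  qed
qed

definition Jterm where
  "Jterm \<sigma> R n = traj_exp P s0 \<sigma> n
        (\<lambda>ss as. if stops_at Sbot n ss then (\<Sum>t\<in>{1..n}. R (ss t)) else 0)"

lemma J_eq: "J P R Sbot s0 \<sigma> = suminf (Jterm \<sigma> R)"
  unfolding J_def Jterm_def ..

definition Rm :: "('s \<Rightarrow> real) \<Rightarrow> real" where "Rm R = (\<Sum>s\<in>UNIV. \<bar>R s\<bar>)"

lemma Rm_ge: "\<bar>R s\<bar> \<le> Rm R"
  unfolding Rm_def by (rule member_le_sum) auto

lemma sumR_bound: "\<bar>\<Sum>t\<in>{1..n}. R (ss t)\<bar> \<le> real n * Rm R"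
proof -
  have "\<bar>\<Sum>t\<in>{1..n}. R (ss t)\<bar> \<le> (\<Sum>t\<in>{1..n}. \<bar>R (ss t)\<bar>)" by (rule sum_abs)
  also have "\<dots> \<le> real (card {1..n}) * Rm R" by (rule sum_bounded_above) (rule Rm_ge)
  finally show ?thesis by simp
qed

lemma Jterm_bound: assumes "is_policy \<sigma>" shows "\<bar>Jterm \<sigma> R n\<bar> \<le> Rm R * (real n * pT \<sigma> n)"
proof -
  have "\<bar>Jterm \<sigma> R n\<bar> \<le> traj_exp P s0 \<sigma> n (\<lambda>ss as. (Rm R * real n) * (if stops_at Sbot n ss then 1 else 0))"
    unfolding Jterm_def
  proof (rule traj_exp_abs[OF assms])
    fix ss :: "nat \<Rightarrow> 's" and as :: "nat \<Rightarrow> 'a"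
    show "\<bar>if stops_at Sbot n ss then \<Sum>t\<in>{1..n}. R (ss t) else 0\<bar>
          \<le> Rm R * real n * (if stops_at Sbot n ss then 1 else 0)"
      using sumR_bound[where R=R and n=n and ss=ss] by (simp add: mult.commute)
  qed
  then show ?thesis unfolding traj_exp_cmult pT_def by (simp add: mult_ac)
qed

lemma Jterm_summable: assumes "is_policy \<sigma>" "fin_T \<sigma>" shows "summable (Jterm \<sigma> R)"
  by (rule summable_comparison_test'[where N=0, OF summable_mult[of _ "Rm R", OF npT_summable[OF assms]]])
     (simp add: Jterm_bound[OF assms(1)])

end

context elp begin

lemma traj_exp_cong: "(\<And>ss as. F ss as = G ss as) \<Longrightarrow> traj_exp P s0 \<sigma> n F = traj_exp P s0 \<sigma> n G"
  by (simp add: traj_exp_def)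

definition Bpol where
  "Bpol \<sigma> R H s a = (\<Sum>s'\<in>UNIV. P s a s' * (R s' + (if s' \<notin> Sbot then (\<Sum>a'\<in>UNIV. \<sigma> s' a' * H s' a') else 0)))"

lemma step_point:
  assumes "is_policy \<sigma>"
  shows "(\<Sum>s'\<in>UNIV. \<Sum>a'\<in>UNIV. P s a s' * \<sigma> s' a' * (A + R s' + (if s' \<notin> Sbot then H s' a' else 0)))
         = A + Bpol \<sigma> R H s a"
proof -
  have i: "(\<Sum>a'\<in>UNIV. P s a s' * \<sigma> s' a' * (A + R s' + (if s' \<notin> Sbot then H s' a' else 0)))
      = P s a s' * A + P s a s' * (R s' + (if s' \<notin> Sbot then (\<Sum>a'\<in>UNIV. \<sigma> s' a' * H s' a') else 0))" for s'
  proof -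
    have "(\<Sum>a'\<in>UNIV. P s a s' * \<sigma> s' a' * (A + R s' + (if s' \<notin> Sbot then H s' a' else 0)))
       = (\<Sum>a'\<in>UNIV. P s a s' * ((A + R s') * \<sigma> s' a' + (if s' \<notin> Sbot then \<sigma> s' a' * H s' a' else 0)))"
      by (rule sum.cong) (auto simp: algebra_simps)
    also have "\<dots> = P s a s' * ((A + R s') * (\<Sum>a'\<in>UNIV. \<sigma> s' a') + (if s' \<notin> Sbot then (\<Sum>a'\<in>UNIV. \<sigma> s' a' * H s' a') else 0))"
      by (simp add: sum_distrib_left[symmetric] sum.distrib)
    finally show ?thesis using pol_sum[OF assms] by (simp add: algebra_simps)
  qed
  have "(\<Sum>s'\<in>UNIV. P s a s' * A) = A" using P_sum[of s a] by (simp add: sum_distrib_right[symmetric])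
  then show ?thesis unfolding i sum.distrib Bpol_def by simp
qed

lemma merge2: fixes c :: "'s \<Rightarrow> 'a \<Rightarrow> real" shows "(\<Sum>s'\<in>UNIV. \<Sum>a'\<in>UNIV. c s' a' * X s' a') + (\<Sum>s'\<in>UNIV. \<Sum>a'\<in>UNIV. c s' a' * Y s' a')
   = (\<Sum>s'\<in>UNIV. \<Sum>a'\<in>UNIV. c s' a' * (X s' a' + Y s' a'))"
  by (simp only: distrib_left sum.distrib)

lemma integrand_T: "alive k ss \<Longrightarrow>
  (if stops_at Sbot (Suc k) (ss(Suc k := s')) then \<Sum>t\<in>{1..Suc k}. R ((ss(Suc k := s')) t) else 0) +
  (if alive (Suc k) (ss(Suc k := s')) then (\<Sum>t\<in>{1..Suc k}. R ((ss(Suc k := s')) t)) +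
      H ((ss(Suc k := s')) (Suc k)) ((as(Suc k := a')) (Suc k)) else 0)
  = (\<Sum>t\<in>{1..k}. R (ss t)) + R s' + (if s' \<notin> Sbot then H s' a' else 0)"
  unfolding stops_Suc alive_Suc sumR_Suc by simp

lemma integrand_F: "\<not> alive k ss \<Longrightarrow>
  (if stops_at Sbot (Suc k) (ss(Suc k := s')) then \<Sum>t\<in>{1..Suc k}. R ((ss(Suc k := s')) t) else 0) +
  (if alive (Suc k) (ss(Suc k := s')) then (\<Sum>t\<in>{1..Suc k}. R ((ss(Suc k := s')) t)) +
      H ((ss(Suc k := s')) (Suc k)) ((as(Suc k := a')) (Suc k)) else 0)
  = 0"
  unfolding stops_Suc alive_Suc by simp

definition Phi where
  "Phi \<sigma> R G k m = (\<Sum>n<Suc k. Jterm \<sigma> R n) + traj_exp P s0 \<sigma> k (\<lambda>ss as.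
      if alive k ss then (\<Sum>t\<in>{1..k}. R (ss t)) + ((Bpol \<sigma> R ^^ m) G) (ss k) (as k) else 0)"

lemma Phi_step:
  assumes pol: "is_policy \<sigma>"
  shows "Phi \<sigma> R G (Suc k) m = Phi \<sigma> R G k (Suc m)"
proof -
  define H where "H = (Bpol \<sigma> R ^^ m) G"
  have "Jterm \<sigma> R (Suc k) + traj_exp P s0 \<sigma> (Suc k) (\<lambda>ss as. if alive (Suc k) ss
          then (\<Sum>t\<in>{1..Suc k}. R (ss t)) + H (ss (Suc k)) (as (Suc k)) else 0)
      = traj_exp P s0 \<sigma> k (\<lambda>ss as. if alive k ss then (\<Sum>t\<in>{1..k}. R (ss t)) + Bpol \<sigma> R H (ss k) (as k) else 0)"
    unfolding Jterm_def traj_exp_add[symmetric] traj_exp_Suc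
    apply (rule traj_exp_cong)
    subgoal for ss as
      apply (cases "alive k ss")
       apply (subst merge2)
       apply (simp only: integrand_T step_point[OF pol])
       apply simp
      apply (subst merge2)
      apply (simp only: integrand_F not_False_eq_True) apply simp
      done
    done
  then show ?thesis unfolding Phi_def H_def by (simp cong: if_cong)
qed

lemma Phi_0: "Phi \<sigma> R G 0 m = (\<Sum>a\<in>UNIV. \<sigma> s0 a * ((Bpol \<sigma> R ^^ m) G) s0 a)"
proof -
  have "Jterm \<sigma> R 0 = 0" unfolding Jterm_def by (simp add: traj_exp_def)
  moreover have "traj_exp P s0 \<sigma> 0 (\<lambda>ss as. if alive 0 ss then (\<Sum>t\<in>{1..0}. R (ss t)) + ((Bpol \<sigma> R ^^ m) G) (ss 0) (as 0) else 0)
     = (\<Sum>a\<in>UNIV. \<sigma> s0 a * ((Bpol \<sigma> R ^^ m) G) s0 a)"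
    by (rule traj_exp_0) simp
  ultimately show ?thesis unfolding Phi_def by simp
qed

lemma Phi_shift: "is_policy \<sigma> \<Longrightarrow> Phi \<sigma> R G k m = Phi \<sigma> R G 0 (k + m)"
proof (induction k arbitrary: m)
  case 0 then show ?case by simp
next
  case (Suc k) then show ?case using Phi_step[OF Suc.prems, of R G k m] by simp
qed

lemma value_lim:
  assumes pol: "is_policy \<sigma>" and fin: "fin_T \<sigma>"
  shows "(\<lambda>N. \<Sum>a\<in>UNIV. \<sigma> s0 a * ((Bpol \<sigma> R ^^ N) G) s0 a) \<longlonglongrightarrow> J P R Sbot s0 \<sigma>"
proof -
  define rem where "rem N = traj_exp P s0 \<sigma> N (\<lambda>ss as.
      if alive N ss then (\<Sum>t\<in>{1..N}. R (ss t)) + G (ss N) (as N) else 0)" for N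
  have eq: "(\<Sum>a\<in>UNIV. \<sigma> s0 a * ((Bpol \<sigma> R ^^ N) G) s0 a) = (\<Sum>n<Suc N. Jterm \<sigma> R n) + rem N" for N
  proof -
    have "Phi \<sigma> R G N 0 = (\<Sum>n<Suc N. Jterm \<sigma> R n) + rem N" unfolding Phi_def rem_def by (simp cong: if_cong)
    then show ?thesis using Phi_shift[OF pol, of R G N 0] unfolding Phi_0 by simp
  qed
  define Gm where "Gm = (\<Sum>s\<in>UNIV. \<Sum>a\<in>UNIV. \<bar>G s a\<bar>)"
  have Gm: "\<bar>G s a\<bar> \<le> Gm" for s a
  proof -
    have "\<bar>G s a\<bar> \<le> (\<Sum>a\<in>UNIV. \<bar>G s a\<bar>)" by (rule member_le_sum) auto
    also have "\<dots> \<le> Gm" unfolding Gm_def by (rule member_le_sum[where f="\<lambda>s. \<Sum>a\<in>UNIV. \<bar>G s a\<bar>"]) (auto intro: sum_nonneg)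
    finally show ?thesis .
  qed
  have rb: "\<bar>rem N\<bar> \<le> (real N * Rm R + Gm) * aT \<sigma> N" for N
  proof -
    have "\<bar>rem N\<bar> \<le> traj_exp P s0 \<sigma> N (\<lambda>ss as. (real N * Rm R + Gm) * (if alive N ss then 1 else 0))"
      unfolding rem_def
    proof (rule traj_exp_abs[OF pol])
      fix ss :: "nat \<Rightarrow> 's" and as :: "nat \<Rightarrow> 'a"
      have "\<bar>(\<Sum>t\<in>{1..N}. R (ss t)) + G (ss N) (as N)\<bar> \<le> real N * Rm R + Gm"
        using sumR_bound[where R=R and n=N and ss=ss] Gm[of "ss N" "as N"] by linarith
      then show "\<bar>if alive N ss then (\<Sum>t\<in>{1..N}. R (ss t)) + G (ss N) (as N) else 0\<bar>
          \<le> (real N * Rm R + Gm) * (if alive N ss then 1 else 0)" by simp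
    qed
    then show ?thesis unfolding traj_exp_cmult aT_def .
  qed
  have "(\<lambda>N. Rm R * (real N * aT \<sigma> N) + Gm * aT \<sigma> N) \<longlonglongrightarrow> Rm R * 0 + Gm * 0"
    by (intro tendsto_intros naT_lim aT_lim pol fin)
  then have bl: "(\<lambda>N. (real N * Rm R + Gm) * aT \<sigma> N) \<longlonglongrightarrow> 0" by (simp add: algebra_simps)
  have "(\<lambda>N. - ((real N * Rm R + Gm) * aT \<sigma> N)) \<longlonglongrightarrow> - 0" by (intro tendsto_intros bl)
  have lb: "\<forall>N. - ((real N * Rm R + Gm) * aT \<sigma> N) \<le> rem N"
    using rb abs_le_iff neg_le_iff_le by (metis minus_le_iff)
  have ub: "\<forall>N. rem N \<le> (real N * Rm R + Gm) * aT \<sigma> N"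
    using rb abs_le_iff by blast
  have rl: "rem \<longlonglongrightarrow> 0"
  proof (rule tendsto_sandwich[where f="\<lambda>N. - ((real N * Rm R + Gm) * aT \<sigma> N)", OF _ _ _ bl])
    show "\<forall>\<^sub>F N in sequentially. - ((real N * Rm R + Gm) * aT \<sigma> N) \<le> rem N"
      by (rule always_eventually) (rule lb)
    show "\<forall>\<^sub>F N in sequentially. rem N \<le> (real N * Rm R + Gm) * aT \<sigma> N"
      by (rule always_eventually) (rule ub)
    show "(\<lambda>N. - ((real N * Rm R + Gm) * aT \<sigma> N)) \<longlonglongrightarrow> 0"
      using tendsto_minus[OF bl] by simp
  qed
  have pl: "(\<lambda>N. \<Sum>n<Suc N. Jterm \<sigma> R n) \<longlonglongrightarrow> suminf (Jterm \<sigma> R)"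
    by (rule LIMSEQ_Suc[OF summable_LIMSEQ[OF Jterm_summable[OF pol fin]]])
  have "(\<lambda>N. (\<Sum>n<Suc N. Jterm \<sigma> R n) + rem N) \<longlonglongrightarrow> suminf (Jterm \<sigma> R) + 0"
    by (intro tendsto_intros pl rl)
  then show ?thesis unfolding eq J_eq by simp
qed

end

context elp begin

lemma vmax_ge: "Q s a \<le> vmax Q s"
  unfolding vmax_def by (rule Max_ge) auto

lemma vmax_mono:
  assumes "\<And>a. Q s a \<le> Q' s a" shows "vmax Q s \<le> vmax Q' s"
proof -
  have "\<forall>y\<in>range (Q s). y \<le> vmax Q' s" using assms vmax_ge[of Q' s] by (auto intro: order_trans)
  then show ?thesis unfolding vmax_def[of Q s] by (simp add: Max_le_iff)
qed

lemma pol_avg_le: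
  assumes "is_policy \<sigma>" shows "(\<Sum>a\<in>UNIV. \<sigma> s a * Q s a) \<le> vmax Q s"
proof -
  have "(\<Sum>a\<in>UNIV. \<sigma> s a * Q s a) \<le> (\<Sum>a\<in>UNIV. \<sigma> s a * vmax Q s)"
    by (intro sum_mono mult_left_mono vmax_ge pol_nonneg assms)
  also have "\<dots> = vmax Q s" using pol_sum[OF assms] by (simp add: sum_distrib_right[symmetric])
  finally show ?thesis .
qed

lemma greedy_avg:
  assumes "greedy Q \<mu>" shows "(\<Sum>a\<in>UNIV. \<mu> s a * Q s a) = vmax Q s"
proof -
  have pol: "is_policy \<mu>" using assms unfolding greedy_def by auto
  have "(\<Sum>a\<in>UNIV. \<mu> s a * Q s a) = (\<Sum>a\<in>UNIV. \<mu> s a * vmax Q s)"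
  proof (rule sum.cong[OF refl])
    fix a
    show "\<mu> s a * Q s a = \<mu> s a * vmax Q s"
    proof (cases "\<mu> s a > 0")
      case True then show ?thesis using assms unfolding greedy_def by auto
    next
      case False then have "\<mu> s a = 0" using pol_nonneg[OF pol, of s a] by linarith
      then show ?thesis by simp
    qed
  qed
  also have "\<dots> = vmax Q s" using pol_sum[OF pol] by (simp add: sum_distrib_right[symmetric])
  finally show ?thesis .
qed

lemma bellman_mono:
  assumes "\<And>s a. Q s a \<le> Q' s a" shows "bellman P R Sbot Q s a \<le> bellman P R Sbot Q' s a"
  unfolding bellman_def
  by (intro sum_mono mult_left_mono P_nonneg add_left_mono) (auto intro: vmax_mono assms)

lemma Bpol_mono:
  assumes "is_policy \<sigma>" "\<And>s a. H s a \<le> H' s a" shows "Bpol \<sigma> R H s a \<le> Bpol \<sigma> R H' s a"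
  unfolding Bpol_def
  by (intro sum_mono mult_left_mono P_nonneg add_left_mono)
     (auto intro!: sum_mono mult_left_mono pol_nonneg assms)

lemma Bpol_le_bellman:
  assumes "is_policy \<sigma>" shows "Bpol \<sigma> R H s a \<le> bellman P R Sbot H s a"
  unfolding Bpol_def bellman_def
  by (intro sum_mono mult_left_mono P_nonneg add_left_mono) (auto intro: pol_avg_le assms)

lemma Bpol_greedy:
  assumes "greedy Q \<mu>" shows "Bpol \<mu> R Q s a = bellman P R Sbot Q s a"
  unfolding Bpol_def bellman_def greedy_avg[OF assms] ..

definition cval where
  "cval \<rho> R Q = (\<Sum>s'\<in>UNIV. \<rho> s' * (R s' + (if s' \<notin> Sbot then vmax Q s' else 0)))"

lemma bellman_bot:
  assumes "\<forall>s\<in>Sbot. \<forall>a s'. P s a s' = \<rho> s'" "s \<in> Sbot"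
  shows "bellman P R Sbot Q s a = cval \<rho> R Q"
  unfolding bellman_def cval_def using assms by simp

lemma bound2: fixes Q :: "'s \<Rightarrow> 'a \<Rightarrow> real" shows "\<bar>Q s a\<bar> \<le> (\<Sum>s\<in>UNIV. \<Sum>a\<in>UNIV. \<bar>Q s a\<bar>)"
proof -
  have "\<bar>Q s a\<bar> \<le> (\<Sum>a\<in>UNIV. \<bar>Q s a\<bar>)" by (rule member_le_sum) auto
  also have "\<dots> \<le> (\<Sum>s\<in>UNIV. \<Sum>a\<in>UNIV. \<bar>Q s a\<bar>)"
    by (rule member_le_sum[where f="\<lambda>s. \<Sum>a\<in>UNIV. \<bar>Q s a\<bar>"]) (auto intro: sum_nonneg)
  finally show ?thesis .
qed

lemma stops_bot: "stops_at Sbot n ss \<Longrightarrow> ss n \<in> Sbot"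
  unfolding stops_at_def by simp

definition Lterm where
  "Lterm \<sigma> Q n = traj_exp P s0 \<sigma> n (\<lambda>ss as. if stops_at Sbot n ss then Q (ss n) (as n) else 0)"

lemma L_eq': "L_obj P Sbot s0 \<sigma> Q = suminf (Lterm \<sigma> Q)"
  unfolding L_obj_def Lterm_def ..

lemma Lterm_summable:
  assumes "is_policy \<sigma>" "fin_T \<sigma>" shows "summable (Lterm \<sigma> Q)"
proof -
  define Qm where "Qm = (\<Sum>s\<in>UNIV. \<Sum>a\<in>UNIV. \<bar>Q s a\<bar>)"
  have bd: "\<bar>Lterm \<sigma> Q n\<bar> \<le> Qm * pT \<sigma> n" for n
  proof -
    have "\<bar>Lterm \<sigma> Q n\<bar> \<le> traj_exp P s0 \<sigma> n (\<lambda>ss as. Qm * (if stops_at Sbot n ss then 1 else 0))"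
      unfolding Lterm_def
      apply (rule traj_exp_abs[OF assms(1)])
      subgoal for ss as using bound2[of Q "ss n" "as n"] unfolding Qm_def
        by (cases "stops_at Sbot n ss") simp_all
      done
    then show ?thesis unfolding traj_exp_cmult pT_def .
  qed
  have sm: "summable (\<lambda>n. Qm * pT \<sigma> n)"
    using pT_sums[OF assms] by (rule summable_mult[OF sums_summable])
  show ?thesis by (rule summable_comparison_test'[where N=0, OF sm]) (simp add: bd)
qed

lemma L_le:
  assumes "is_policy \<sigma>" "fin_T \<sigma>" "\<forall>s\<in>Sbot. \<forall>a. Q s a \<le> c"
  shows "L_obj P Sbot s0 \<sigma> Q \<le> c"
proof -
  have le: "Lterm \<sigma> Q n \<le> c * pT \<sigma> n" for n
  proof -
    have "Lterm \<sigma> Q n \<le> traj_exp P s0 \<sigma> n (\<lambda>ss as. c * (if stops_at Sbot n ss then 1 else 0))"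
      unfolding Lterm_def
      apply (rule traj_exp_mono[OF assms(1)])
      subgoal for ss as using assms(3) stops_bot[of n ss]
        by (cases "stops_at Sbot n ss") simp_all
      done
    then show ?thesis unfolding traj_exp_cmult pT_def .
  qed
  have cs: "(\<lambda>n. c * pT \<sigma> n) sums (c * 1)" by (rule sums_mult[OF pT_sums[OF assms(1,2)]])
  have "suminf (Lterm \<sigma> Q) \<le> suminf (\<lambda>n. c * pT \<sigma> n)"
    by (rule suminf_le[OF le Lterm_summable[OF assms(1,2)]]) (use cs in \<open>auto simp: sums_iff\<close>)
  then show ?thesis unfolding L_eq' using cs by (simp add: sums_iff)
qed

lemma L_const:
  assumes "is_policy \<sigma>" "fin_T \<sigma>" "\<forall>s\<in>Sbot. \<forall>a. Q s a = c"
  shows "L_obj P Sbot s0 \<sigma> Q = c"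
proof -
  have eq: "Lterm \<sigma> Q n = c * pT \<sigma> n" for n
  proof -
    have "Lterm \<sigma> Q n = traj_exp P s0 \<sigma> n (\<lambda>ss as. c * (if stops_at Sbot n ss then 1 else 0))"
      unfolding Lterm_def
      apply (rule traj_exp_cong)
      subgoal for ss as using assms(3) stops_bot[of n ss]
        by (cases "stops_at Sbot n ss") simp_all
      done
    then show ?thesis unfolding traj_exp_cmult pT_def .
  qed
  have cs: "(\<lambda>n. c * pT \<sigma> n) sums (c * 1)" by (rule sums_mult[OF pT_sums[OF assms(1,2)]])
  then show ?thesis unfolding L_eq' eq[abs_def] by (simp add: sums_iff)
qed

end

context elp begin

lemma main:
  fixes R :: "'s \<Rightarrow> real" and \<rho> :: "'s \<Rightarrow> real" and \<pi> \<mu> \<pi>' Qmax :: "'s \<Rightarrow> 'a \<Rightarrow> real"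
  assumes rho: "\<forall>s\<in>Sbot. \<forall>a s'. P s a s' = \<rho> s'"
    and finall: "\<And>\<sigma>. is_policy \<sigma> \<Longrightarrow> fin_T \<sigma>"
    and pol: "is_policy \<pi>"
    and feas: "\<forall>s a. Qmax s a \<le> bellman P R Sbot Qmax s a"
    and opt: "\<forall>Q. (\<forall>s a. Q s a \<le> bellman P R Sbot Q s a)
                  \<longrightarrow> L_obj P Sbot s0 \<pi> Q \<le> L_obj P Sbot s0 \<pi> Qmax"
    and gr: "greedy Qmax \<mu>"
    and pol': "is_policy \<pi>'"
  shows "J P R Sbot s0 \<pi>' \<le> J P R Sbot s0 \<mu>"
proof -
  have polm: "is_policy \<mu>" using gr unfolding greedy_def by auto
  define B where "B = bellman P R Sbot"
  define Qn where "Qn n = (B ^^ n) Qmax" for n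
  define W where "W n = (Bpol \<pi>' R ^^ n) Qmax" for n
  define V where "V n = (Bpol \<mu> R ^^ n) Qmax" for n
  define c0 where "c0 = cval \<rho> R Qmax"
  have QnS: "Qn (Suc n) = B (Qn n)" for n unfolding Qn_def by simp
  have WS: "W (Suc n) = Bpol \<pi>' R (W n)" for n unfolding W_def by simp
  have VS: "V (Suc n) = Bpol \<mu> R (V n)" for n unfolding V_def by simp
  have Qn_inc: "\<forall>s a. Qn n s a \<le> Qn (Suc n) s a" for n
  proof (induction n)
    case 0 then show ?case using feas unfolding Qn_def B_def by simp
  next
    case (Suc n) then show ?case unfolding QnS[of "Suc n"] QnS[of n] B_def
      by (intro allI bellman_mono) auto
  qed
  have W_le: "\<forall>s a. W n s a \<le> Qn n s a" for n
  proof (induction n)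
    case 0 then show ?case unfolding W_def Qn_def by simp
  next
    case (Suc n)
    show ?case unfolding WS QnS B_def
    proof (intro allI)
      fix s a
      have "Bpol \<pi>' R (W n) s a \<le> Bpol \<pi>' R (Qn n) s a" using Suc by (intro Bpol_mono pol') auto
      also have "\<dots> \<le> bellman P R Sbot (Qn n) s a" by (rule Bpol_le_bellman[OF pol'])
      finally show "Bpol \<pi>' R (W n) s a \<le> bellman P R Sbot (Qn n) s a" .
    qed
  qed
  have V_inc: "\<forall>s a. V n s a \<le> V (Suc n) s a" for n
  proof (induction n)
    case 0 then show ?case using feas unfolding V_def by (simp add: Bpol_greedy[OF gr])
  next
    case (Suc n) then show ?case unfolding VS[of "Suc n"] VS[of n]
      by (intro allI Bpol_mono polm) auto
  qed
  have V_ge: "V 1 s a \<le> V (Suc n) s a" for n s a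
  proof (induction n)
    case 0 then show ?case by simp
  next
    case (Suc n) then show ?case using V_inc[of "Suc n"] by (meson order_trans)
  qed
  have V1: "V 1 s0 a = c0" for a
    unfolding V_def c0_def using bellman_bot[OF rho s0bot] by (simp add: Bpol_greedy[OF gr])
  have up: "(\<Sum>a\<in>UNIV. \<pi>' s0 a * W (Suc N) s0 a) \<le> c0" for N
  proof -
    have feasN: "\<forall>s a. Qn (Suc N) s a \<le> bellman P R Sbot (Qn (Suc N)) s a"
      using Qn_inc[of "Suc N"] unfolding QnS[of "Suc N"] B_def by simp
    have cN: "Qn (Suc N) s a = cval \<rho> R (Qn N)" if "s \<in> Sbot" for s a
      unfolding QnS B_def using bellman_bot[OF rho that] by simp
    have "(\<Sum>a\<in>UNIV. \<pi>' s0 a * W (Suc N) s0 a) \<le> (\<Sum>a\<in>UNIV. \<pi>' s0 a * Qn (Suc N) s0 a)"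
      by (intro sum_mono mult_left_mono pol_nonneg pol') (use W_le in auto)
    also have "\<dots> = cval \<rho> R (Qn N)"
      using cN[OF s0bot] pol_sum[OF pol'] by (simp add: sum_distrib_right[symmetric])
    also have "\<dots> = L_obj P Sbot s0 \<pi> (Qn (Suc N))"
      by (rule L_const[OF pol finall[OF pol], symmetric]) (use cN in auto)
    also have "\<dots> \<le> L_obj P Sbot s0 \<pi> Qmax" using opt feasN by blast
    also have "\<dots> \<le> c0"
      by (rule L_le[OF pol finall[OF pol]])
         (use feas bellman_bot[OF rho] in \<open>metis c0_def\<close>)
    finally show ?thesis .
  qed
  have lo: "c0 \<le> (\<Sum>a\<in>UNIV. \<mu> s0 a * V (Suc N) s0 a)" for N
  proof -
    have "c0 = (\<Sum>a\<in>UNIV. \<mu> s0 a * V 1 s0 a)"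
      using V1 pol_sum[OF polm] by (simp add: sum_distrib_right[symmetric])
    also have "\<dots> \<le> (\<Sum>a\<in>UNIV. \<mu> s0 a * V (Suc N) s0 a)"
      by (intro sum_mono mult_left_mono pol_nonneg polm V_ge)
    finally show ?thesis .
  qed
  have l1: "(\<lambda>N. \<Sum>a\<in>UNIV. \<pi>' s0 a * W (Suc N) s0 a) \<longlonglongrightarrow> J P R Sbot s0 \<pi>'"
    unfolding W_def by (rule LIMSEQ_Suc[OF value_lim[OF pol' finall[OF pol']]])
  have l2: "(\<lambda>N. \<Sum>a\<in>UNIV. \<mu> s0 a * V (Suc N) s0 a) \<longlonglongrightarrow> J P R Sbot s0 \<mu>"
    unfolding V_def by (rule LIMSEQ_Suc[OF value_lim[OF polm finall[OF polm]]])
  have "J P R Sbot s0 \<pi>' \<le> c0" by (rule LIMSEQ_le_const2[OF l1]) (use up in auto)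
  moreover have "c0 \<le> J P R Sbot s0 \<mu>" by (rule LIMSEQ_le_const[OF l2]) (use lo in auto)
  ultimately show ?thesis by linarith
qed

end

theorem mainTheorem10:
  fixes P :: "'s::finite \<Rightarrow> 'a::finite \<Rightarrow> 's \<Rightarrow> real"
    and R :: "'s \<Rightarrow> real" and \<rho> :: "'s \<Rightarrow> real" and Sbot :: "'s set" and s0 :: 's
    and \<pi> \<mu> :: "'s \<Rightarrow> 'a \<Rightarrow> real" and Qmax :: "'s \<Rightarrow> 'a \<Rightarrow> real"
  assumes elp: "is_ELP P \<rho> Sbot s0"
    and pol: "is_policy \<pi>"
    and feas: "\<forall>s a. Qmax s a \<le> bellman P R Sbot Qmax s a"
    and opt: "\<forall>Q. (\<forall>s a. Q s a \<le> bellman P R Sbot Q s a)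
                  \<longrightarrow> L_obj P Sbot s0 \<pi> Q \<le> L_obj P Sbot s0 \<pi> Qmax"
    and gr: "greedy Qmax \<mu>"
  shows "\<forall>\<pi>'. is_policy \<pi>' \<longrightarrow> J P R Sbot s0 \<pi>' \<le> J P R Sbot s0 \<mu>"
proof (intro allI impI)
  fix \<pi>' :: "'s \<Rightarrow> 'a \<Rightarrow> real"
  assume pol': "is_policy \<pi>'"
  interpret elp P Sbot s0 using elp unfolding is_ELP_def by unfold_locales auto
  show "J P R Sbot s0 \<pi>' \<le> J P R Sbot s0 \<mu>"
  proof (rule main[OF _ _ pol feas opt gr pol'])
    show "\<forall>s\<in>Sbot. \<forall>a s'. P s a s' = \<rho> s'" using elp unfolding is_ELP_def by auto
    show "\<And>\<sigma>. is_policy \<sigma> \<Longrightarrow> fin_T \<sigma>" using elp unfolding is_ELP_def fin_T_iff by auto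
  qed
qed

end
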